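(* The quantity $c^*_\infty=c^*_\infty(d,D,f'(0),g'(0))$, viewed as a function of $(d,D,f'(0),g'(0))\in(0,\infty)^4$, satisfies: (i) $\max\{c_f,c_g\}\leq c^*_\infty\leq 2\sqrt{\max\{D,d\}\max\{g'(0),f'(0)\}}$, and the last inequality is strict if and only if either ($D>d$ and $f'(0)>g'(0)$) or ($D<d$ and $f'(0)<g'(0)$); (ii) $c^*_\infty$ is continuous; (iii) for fixed $d,f'(0),g'(0)$, the map $D\mapsto c^*_\infty(D)$ is non-decreasing; (iv) $\lim_{D\to+\infty}c^*_\infty(D)/\sqrt D\in(0,+\infty)$.
   Context: For $D,d>0$ and $f'(0),g'(0)>0$: $c_f:=2\sqrt{df'(0)}$, $c_g:=2\sqrt{Dg'(0)}$, and $c^*_\infty:=c_f$ if $\frac{D}{d}\leq2-\frac{g'(0)}{f'(0)}$; $c^*_\infty:=c_g$ if $\frac{d}{D}\leq 2-\frac{f'(0)}{g'(0)}$; $c^*_\infty:=\frac{|Df'(0)-dg'(0)|}{\sqrt{(D-d)(f'(0)-g'(0))}}$ otherwise. (This is the asymptotic speed of propagation of the two-half-space system $u_t-D\Delta u=g(u)$ in $\{x_N<0\}$, $v_t-d\Delta v=f(v)$ in $\{x_N>0\}$, with exchange conditions $D\partial_{x_N}u=\nu v-\mu u$, $-d\partial_{x_N}v=\mu u-\nu v$ on $\{x_N=0\}$.) *)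

theory Defs
  imports "HOL-Analysis.Analysis"
begin

text \<open>Here f0 stands for f'(0) and g0 for g'(0).\<close>

definition c_f :: "real \<Rightarrow> real \<Rightarrow> real" where
  "c_f d f0 = 2 * sqrt (d * f0)"

definition c_g :: "real \<Rightarrow> real \<Rightarrow> real" where
  "c_g D g0 = 2 * sqrt (D * g0)"

definition c_star_inf :: "real \<Rightarrow> real \<Rightarrow> real \<Rightarrow> real \<Rightarrow> real" where
  "c_star_inf d D f0 g0 =
     (if D / d \<le> 2 - g0 / f0 then c_f d f0
      else if d / D \<le> 2 - f0 / g0 then c_g D g0
      else \<bar>D * f0 - d * g0\<bar> / sqrt ((D - d) * (f0 - g0)))"

end

theory Submission
  imports Defs
begin


definition uu :: "real \<Rightarrow> real \<Rightarrow> real \<Rightarrow> real \<Rightarrow> real" where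
  "uu d D a b = D*a + d*b - 2*d*a"
definition vv :: "real \<Rightarrow> real \<Rightarrow> real \<Rightarrow> real \<Rightarrow> real" where
  "vv d D a b = D*a + d*b - 2*D*b"
definition psi :: "real \<times> real \<Rightarrow> real" where
  "psi p = (if snd p \<le> 0 \<and> fst p \<ge> 0 then fst p - snd p
            else if fst p \<le> 0 then 0 else (fst p)\<^sup>2 / (fst p + snd p))"
definition GG :: "real \<Rightarrow> real \<Rightarrow> real \<Rightarrow> real \<Rightarrow> real" where
  "GG d D a b = 4*d*a + 2 * psi (uu d D a b, vv d D a b)"

lemma case1_iff:
  assumes "d > 0" "a > 0"
  shows "(D / d \<le> 2 - b / a) \<longleftrightarrow> uu d D a b \<le> 0"
  using assms by (simp add: uu_def field_simps)

lemma case2_iff: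
  assumes "D > 0" "b > 0"
  shows "(d / D \<le> 2 - a / b) \<longleftrightarrow> vv d D a b \<le> 0"
  using assms by (simp add: vv_def field_simps)

lemma not_both_neg:
  assumes "d > 0" "D > 0" "a > 0" "b > 0" "uu d D a b \<le> 0" "vv d D a b \<le> 0"
  shows "uu d D a b = 0 \<and> vv d D a b = 0"
proof -
  have h1: "D*a + d*b \<le> 2*d*a" "D*a + d*b \<le> 2*D*b" using assms by (auto simp: uu_def vv_def)
  have "(D*a + d*b)^2 \<le> (2*d*a)*(2*D*b)"
    unfolding power2_eq_square
    by (rule mult_mono) (use h1 assms in auto)
  moreover have "(D*a - d*b)^2 \<ge> 0" by simp
  ultimately have "(D*a - d*b)^2 \<le> 0" by (simp add: power2_eq_square algebra_simps)
  hence e: "D*a = d*b" by simp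
  have "D*a \<le> d*a" using h1(1) e by linarith
  hence "D \<le> d" using assms by (simp add: mult_le_cancel_right_pos)
  moreover have "d*b \<le> D*b" using h1(2) e by linarith
  hence "d \<le> D" using assms by (simp add: mult_le_cancel_right_pos)
  ultimately have "D = d" by simp
  thus ?thesis using e assms by (auto simp: uu_def vv_def)
qed

lemma sqrt4: "2 * sqrt x = sqrt (4 * x)"
  by (simp add: real_sqrt_mult)

lemma key:
  assumes "d > 0" "D > 0" "a > 0" "b > 0"
  shows "c_star_inf d D a b = sqrt (GG d D a b)"
proof -
  define u where "u = uu d D a b"
  define v where "v = vv d D a b"
  have uv: "u + v = 2 * ((D - d) * (a - b))" unfolding u_def v_def uu_def vv_def by (simp add: algebra_simps)
  show ?thesis
  proof (cases "u \<le> 0")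
    case True
    note u0 = True
    have "psi (u, v) = 0"
    proof (cases "v \<le> 0 \<and> u \<ge> 0")
      case True
      then show ?thesis using not_both_neg[OF assms] u0 u_def v_def by (auto simp: psi_def)
    qed (use True in \<open>auto simp: psi_def\<close>)
    then show ?thesis using True case1_iff[of d a D b] assms
      by (simp add: c_star_inf_def c_f_def GG_def u_def v_def sqrt4 mult.assoc)
  next
    case False
    note u0 = False
    show ?thesis
    proof (cases "v \<le> 0")
      case True
      have "psi (u, v) = u - v" using True u0 by (auto simp: psi_def)
      moreover have "4*d*a + 2*(u - v) = 4 * (D*b)" unfolding u_def v_def uu_def vv_def by (simp add: algebra_simps)
      ultimately show ?thesis using True u0 case1_iff[of d a D b] case2_iff[of D b d a] assms
        by (simp add: c_star_inf_def c_g_def GG_def sqrt4 flip: u_def v_def)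
    next
      case False
      have ps: "psi (u, v) = u\<^sup>2 / (u + v)" using False u0 by (auto simp: psi_def)
      define w where "w = (D - d) * (a - b)"
      have w0: "w > 0" using False u0 uv w_def by linarith
      have id: "(D*a - d*b)\<^sup>2 = 4*d*a*w + u\<^sup>2" unfolding w_def u_def uu_def
        by (simp add: power2_eq_square algebra_simps)
      have "\<bar>D*a - d*b\<bar> / sqrt w = sqrt ((D*a - d*b)\<^sup>2 / w)"
        by (simp add: real_sqrt_divide)
      also have "(D*a - d*b)\<^sup>2 / w = 4*d*a + 2 * (u\<^sup>2 / (u + v))"
        using w0 uv id unfolding w_def[symmetric] by (simp add: field_simps)
      finally show ?thesis using False u0 case1_iff[of d a D b] case2_iff[of D b d a] assms ps
        by (simp add: c_star_inf_def GG_def w_def flip: u_def v_def)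
    qed
  qed
qed



definition TT :: "(real \<times> real) set" where "TT = {p. fst p \<ge> 0 \<or> snd p \<ge> 0}"

lemma uv_in_TT:
  assumes "d > 0" "D > 0" "a > 0" "b > 0"
  shows "(uu d D a b, vv d D a b) \<in> TT"
  using not_both_neg[OF assms] unfolding TT_def by force

lemma L1:
  assumes "p \<in> TT" "0 \<le> t" "t \<le> 1"
  shows "2*t*fst p - t^2*(fst p + snd p) \<le> psi p"
proof -
  obtain u v where p: "p = (u, v)" by fastforce
  show ?thesis
  proof (cases "v \<le> 0 \<and> u \<ge> 0")
    case True
    have "u - v - (2*t*u - t^2*(u + v)) = u*(1-t)^2 + (-v)*(1 - t^2)"
      by (simp add: power2_eq_square algebra_simps)
    moreover have "t^2 \<le> 1" using assms by (simp add: power_le_one)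
    hence "(-v)*(1 - t^2) \<ge> 0" using True by (intro mult_nonneg_nonneg) auto
    moreover have "u*(1-t)^2 \<ge> 0" using True by simp
    moreover have "psi p = u - v" using True p by (simp add: psi_def)
    ultimately show ?thesis using p by simp
  next
    case F: False
    show ?thesis
    proof (cases "u \<le> 0")
      case True
      hence v0: "v \<ge> 0" using assms p F unfolding TT_def by auto
      have "2*t*u - t^2*(u + v) = t*u*(2 - t) - t^2 * v" by (simp add: power2_eq_square algebra_simps)
      moreover have "t*u*(2-t) \<le> 0" using True assms by (simp add: mult_nonneg_nonpos mult_nonpos_nonneg)
      moreover have "t^2 * v \<ge> 0" using v0 by simp
      ultimately show ?thesis using True F p by (simp add: psi_def)
    next
      case False
      hence uv: "u > 0" "v > 0" using F by auto
      have "u^2/(u+v) - (2*t*u - t^2*(u + v)) = (u - t*(u+v))^2/(u+v)"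
        using uv by (simp add: field_simps power2_eq_square)
      moreover have "(u - t*(u+v))^2/(u+v) \<ge> 0" using uv by simp
      moreover have "psi p = u^2/(u+v)" using F False p by (simp add: psi_def)
      ultimately show ?thesis using p by simp
    qed
  qed
qed

lemma L2:
  assumes "p \<in> TT"
  shows "\<exists>t\<in>{0..1}. psi p = 2*t*fst p - t^2*(fst p + snd p)"
proof -
  obtain u v where p: "p = (u, v)" by fastforce
  show ?thesis
  proof (cases "v \<le> 0 \<and> u \<ge> 0")
    case True
    then show ?thesis using p by (intro bexI[of _ 1]) (auto simp: psi_def)
  next
    case F: False
    show ?thesis
    proof (cases "u \<le> 0")
      case True
      then show ?thesis using p F by (intro bexI[of _ 0]) (auto simp: psi_def)
    next
      case False
      hence uv: "u > 0" "v > 0" using F by auto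
      have e: "(u/(u+v))^2*(u + v) = u^2/(u+v)"
        using uv by (simp add: power_divide power2_eq_square)
      have "u^2/(u+v) = 2*(u/(u+v))*u - (u/(u+v))^2*(u + v)"
        unfolding e by (simp add: power2_eq_square)
      moreover have "u/(u+v) \<in> {0..1}" using uv by auto
      ultimately show ?thesis using F False p by (intro bexI[of _ "u/(u+v)"]) (auto simp: psi_def)
    qed
  qed
qed

lemma psi_nonneg: "p \<in> TT \<Longrightarrow> psi p \<ge> 0"
  using L1[of p 0] by simp



lemma cont_q: "continuous_on {p::real\<times>real. fst p \<ge> 0 \<and> snd p \<ge> 0} (\<lambda>p. (fst p)^2/(fst p + snd p))"
  (is "continuous_on ?C ?q")
proof (unfold continuous_on_eq_continuous_within, intro ballI)
  fix x assume x: "x \<in> ?C"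
  show "continuous (at x within ?C) ?q"
  proof (cases "x = 0")
    case False
    hence "fst x + snd x \<noteq> 0" using x by (auto simp: prod_eq_iff)
    hence "isCont ?q x" by (intro continuous_intros) auto
    thus ?thesis by (rule continuous_at_imp_continuous_within)
  next
    case True
    have "(?q \<longlongrightarrow> 0) (at 0 within ?C)"
    proof (rule tendsto_sandwich[of "\<lambda>_. 0" _ _ "\<lambda>p. fst p"])
      show "\<forall>\<^sub>F p in at 0 within ?C. 0 \<le> ?q p"
        by (auto simp: eventually_at_filter)
      have aux: "?q p \<le> fst p" if "p \<in> ?C" for p
      proof -
        obtain u v where p: "p = (u,v)" by fastforce
        have uv: "u \<ge> 0" "v \<ge> 0" using that p by auto
        have "u^2/(u+v) \<le> u"
        proof (cases "u = 0")
          case False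
          hence "u^2/(u+v) \<le> u^2/u" using uv
            by (intro divide_left_mono) auto
          also have "\<dots> = u" by (simp add: power2_eq_square)
          finally show ?thesis .
        qed auto
        thus ?thesis using p by simp
      qed
      show "\<forall>\<^sub>F p in at 0 within ?C. ?q p \<le> fst p"
        unfolding eventually_at_filter by (intro always_eventually allI impI aux)
      show "((\<lambda>_. 0::real) \<longlongrightarrow> 0) (at 0 within ?C)" by simp
      have "((\<lambda>p::real\<times>real. fst p) \<longlongrightarrow> fst (0::real\<times>real)) (at 0 within ?C)"
        by (intro tendsto_intros)
      thus "((\<lambda>p::real\<times>real. fst p) \<longlongrightarrow> 0) (at 0 within ?C)" by simp
    qed
    thus ?thesis using True by (simp add: continuous_within)
  qed
qed

lemma cont_psi: "continuous_on TT psi"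
proof -
  define A where "A = {p::real\<times>real. fst p \<le> 0 \<and> snd p \<ge> 0}"
  define B where "B = {p::real\<times>real. fst p \<ge> 0 \<and> snd p \<le> 0}"
  define C where "C = {p::real\<times>real. fst p \<ge> 0 \<and> snd p \<ge> 0}"
  have T: "TT = (A \<union> B) \<union> C" by (auto simp: TT_def A_def B_def C_def)
  have cA: "closed A" unfolding A_def by (intro closed_Collect_conj closed_Collect_le continuous_intros)
  have cB: "closed B" unfolding B_def by (intro closed_Collect_conj closed_Collect_le continuous_intros)
  have cC: "closed C" unfolding C_def by (intro closed_Collect_conj closed_Collect_le continuous_intros)
  have "continuous_on A psi"
  proof (rule continuous_on_eq[OF continuous_on_const[of A 0]])
    fix p assume "p \<in> A" thus "0 = psi p" by (auto simp: A_def psi_def)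
  qed
  moreover have "continuous_on B psi"
  proof (rule continuous_on_eq[OF continuous_on_diff[OF continuous_on_fst[OF continuous_on_id] continuous_on_snd[OF continuous_on_id]]])
    fix p assume "p \<in> B" thus "fst p - snd p = psi p" by (auto simp: B_def psi_def)
  qed
  moreover have "continuous_on C psi"
  proof (rule continuous_on_eq[OF cont_q[folded C_def]])
    fix p :: "real \<times> real" assume p: "p \<in> C"
    obtain u v where uv: "p = (u,v)" by fastforce
    show "(fst p)^2/(fst p + snd p) = psi p"
      using p unfolding uv C_def psi_def by (auto simp: power2_eq_square)
  qed
  ultimately show ?thesis unfolding T using cA cB cC
    by (intro continuous_on_closed_Un closed_Un) auto
qed



lemma cont_main:
  "continuous_on {p :: real \<times> real \<times> real \<times> real.
            fst p > 0 \<and> fst (snd p) > 0 \<and> fst (snd (snd p)) > 0 \<and> snd (snd (snd p)) > 0}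
          (\<lambda>(d', D', a, b). c_star_inf d' D' a b)" (is "continuous_on ?S ?f")
proof -
  define h where "h = (\<lambda>p::real \<times> real \<times> real \<times> real.
     (uu (fst p) (fst (snd p)) (fst (snd (snd p))) (snd (snd (snd p))),
      vv (fst p) (fst (snd p)) (fst (snd (snd p))) (snd (snd (snd p)))))"
  have ch: "continuous_on ?S h" unfolding h_def uu_def vv_def by (intro continuous_intros)
  have im: "h ` ?S \<subseteq> TT" unfolding h_def using uv_in_TT by auto
  have cp: "continuous_on ?S (\<lambda>p. psi (h p))"
    by (rule continuous_on_compose2[OF cont_psi ch im])
  have "continuous_on ?S (\<lambda>p. sqrt (4 * fst p * fst (snd (snd p)) + 2 * psi (h p)))"
    by (intro continuous_intros cp)
  thus ?thesis
  proof (rule continuous_on_eq)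
    fix p assume "p \<in> ?S"
    then show "sqrt (4 * fst p * fst (snd (snd p)) + 2 * psi (h p)) = ?f p"
      using key[of "fst p" "fst (snd p)" "fst (snd (snd p))" "snd (snd (snd p))"]
      by (auto simp: h_def GG_def split: prod.splits)
  qed
qed



lemma GG_mono:
  assumes "d > 0" "a > 0" "b > 0" "0 < D1" "D1 \<le> D2"
  shows "GG d D1 a b \<le> GG d D2 a b"
proof -
  have D2: "D2 > 0" using assms by linarith
  define p1 where "p1 = (uu d D1 a b, vv d D1 a b)"
  define p2 where "p2 = (uu d D2 a b, vv d D2 a b)"
  have T1: "p1 \<in> TT" unfolding p1_def using uv_in_TT assms by auto
  have T2: "p2 \<in> TT" unfolding p2_def using uv_in_TT assms D2 by auto
  obtain t where t: "t \<in> {0..1}" "psi p1 = 2*t*fst p1 - t^2*(fst p1 + snd p1)"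
    using L2[OF T1] by blast
  have "(2*t*fst p2 - t^2*(fst p2 + snd p2)) - (2*t*fst p1 - t^2*(fst p1 + snd p1))
        = 2*t*(D2-D1)*((1-t)*a + t*b)"
    unfolding p1_def p2_def uu_def vv_def by (simp add: algebra_simps power2_eq_square)
  moreover have "2*t*(D2-D1)*((1-t)*a + t*b) \<ge> 0"
    using t(1) assms by (intro mult_nonneg_nonneg add_nonneg_nonneg) auto
  moreover have "2*t*fst p2 - t^2*(fst p2 + snd p2) \<le> psi p2"
    using L1[OF T2] t(1) by auto
  ultimately have "psi p1 \<le> psi p2" using t(2) by linarith
  thus ?thesis unfolding GG_def p1_def p2_def by simp
qed

lemma mono_main:
  assumes "d > 0" "a > 0" "b > 0"
  shows "mono_on {0<..} (\<lambda>D'. c_star_inf d D' a b)"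
proof (rule mono_onI)
  fix r s :: real assume "r \<in> {0<..}" "s \<in> {0<..}" "r \<le> s"
  thus "c_star_inf d r a b \<le> c_star_inf d s a b"
    using key[of d r a b] key[of d s a b] GG_mono[of d a b r s] assms by auto
qed



lemma GG_lower:
  assumes "d > 0" "D > 0" "a > 0" "b > 0"
  shows "4*d*a \<le> GG d D a b" "4*D*b \<le> GG d D a b"
proof -
  have T: "(uu d D a b, vv d D a b) \<in> TT" using uv_in_TT assms by auto
  show "4*d*a \<le> GG d D a b" using psi_nonneg[OF T] by (simp add: GG_def)
  have "2*fst (uu d D a b, vv d D a b) - (fst (uu d D a b, vv d D a b) + snd (uu d D a b, vv d D a b))
     \<le> psi (uu d D a b, vv d D a b)" using L1[OF T, of 1] by simp
  thus "4*D*b \<le> GG d D a b" by (simp add: GG_def uu_def vv_def algebra_simps)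
qed

lemma GG_upper:
  assumes "d > 0" "D > 0" "a > 0" "b > 0"
  shows "GG d D a b \<le> 4 * (max D d * max b a)
     \<and> (GG d D a b < 4 * (max D d * max b a) \<longleftrightarrow> ((D > d \<and> a > b) \<or> (D < d \<and> a < b)))"
proof -
  define u where "u = uu d D a b"
  define v where "v = vv d D a b"
  define w where "w = (D - d) * (a - b)"
  have uvw: "u + v = 2 * w" unfolding u_def v_def uu_def vv_def w_def by (simp add: algebra_simps)
  have G: "GG d D a b = 4*d*a + 2 * psi (u, v)" by (simp add: GG_def u_def v_def)
  have Mge: "D*b \<le> max D d * max b a" "d*a \<le> max D d * max b a"
    using assms by (auto intro!: mult_mono)
  show ?thesis
  proof (cases "v \<le> 0 \<and> u \<ge> 0")
    case True
    have "psi (u,v) = u - v" using True by (simp add: psi_def)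
    hence GA: "GG d D a b = 4*(D*b)" unfolding G u_def v_def uu_def vv_def by (simp add: algebra_simps)
    have vv: "D*a + d*b \<le> 2*D*b" using True by (simp add: v_def vv_def)
    have "D*b < max D d * max b a \<longleftrightarrow> ((D > d \<and> a > b) \<or> (D < d \<and> a < b))"
    proof
      assume lt: "D*b < max D d * max b a"
      have "D < d \<or> b < a"
      proof (rule ccontr)
        assume "\<not> (D < d \<or> b < a)"
        hence "max D d = D" "max b a = b" by auto
        thus False using lt by simp
      qed
      thus "(D > d \<and> a > b) \<or> (D < d \<and> a < b)"
      proof
        assume Dd: "D < d"
        hence "D*b < d*b" using assms by simp
        hence "D*a < D*b" using vv by linarith
        thus ?thesis using Dd assms by simp
      next
        assume ba: "b < a"
        hence "D*b < D*a" using assms by simp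
        hence "d*b < D*b" using vv by linarith
        thus ?thesis using ba assms by simp
      qed
    next
      assume "(D > d \<and> a > b) \<or> (D < d \<and> a < b)"
      thus "D*b < max D d * max b a"
      proof
        assume h: "D > d \<and> a > b"
        hence "max D d * max b a = D * a" by simp
        thus ?thesis using h assms by simp
      next
        assume h: "D < d \<and> a < b"
        hence "max D d * max b a = d * b" by simp
        thus ?thesis using h assms by simp
      qed
    qed
    thus ?thesis using GA Mge by simp
  next
    case F: False
    show ?thesis
    proof (cases "u \<le> 0")
      case True
      have "psi (u,v) = 0" using True F by (auto simp add: psi_def)
      hence GB: "GG d D a b = 4*(d*a)" unfolding G by simp
      have uu: "D*a + d*b \<le> 2*d*a" using True by (simp add: u_def uu_def)
      have "d*a < max D d * max b a \<longleftrightarrow> ((D > d \<and> a > b) \<or> (D < d \<and> a < b))"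
      proof
        assume lt: "d*a < max D d * max b a"
        have "d < D \<or> a < b"
        proof (rule ccontr)
          assume "\<not> (d < D \<or> a < b)"
          hence "max D d = d" "max b a = a" by auto
          thus False using lt by simp
        qed
        thus "(D > d \<and> a > b) \<or> (D < d \<and> a < b)"
        proof
          assume Dd: "d < D"
          hence "d*a < D*a" using assms by simp
          hence "d*b < d*a" using uu by linarith
          thus ?thesis using Dd assms by simp
        next
          assume ab: "a < b"
          hence "d*a < d*b" using assms by simp
          hence "D*a < d*a" using uu by linarith
          thus ?thesis using ab assms by simp
        qed
      next
        assume "(D > d \<and> a > b) \<or> (D < d \<and> a < b)"
        thus "d*a < max D d * max b a"
        proof
          assume h: "D > d \<and> a > b"
          hence "max D d * max b a = D * a" by simp
          thus ?thesis using h assms by simp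
        next
          assume h: "D < d \<and> a < b"
          hence "max D d * max b a = d * b" by simp
          thus ?thesis using h assms by simp
        qed
      qed
      thus ?thesis using GB Mge by simp
    next
      case False
      hence uv: "u > 0" "v > 0" using F by auto
      have w0: "w > 0" using uv uvw by linarith
      have ps: "psi (u,v) = u^2/(u+v)" using uv by (simp add: psi_def)
      have P: "(D > d \<and> a > b) \<or> (D < d \<and> a < b)"
        using w0 unfolding w_def by (auto simp: zero_less_mult_iff)
      have "GG d D a b < 4 * (max D d * max b a)"
        using P
      proof
        assume h: "D > d \<and> a > b"
        hence M: "max D d * max b a = D * a" by simp
        have u1: "u < 2*w" using uvw uv by linarith
        have u2: "u < (D-d)*a" unfolding u_def uu_def using h assms
          by (simp add: algebra_simps)
        have "u*u < (2*w)*((D-d)*a)" using u1 u2 uv by (intro mult_strict_mono) auto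
        also have "\<dots> \<le> 4*w*((D-d)*a)" using w0 h assms by simp
        finally have "u^2/w < 4*((D-d)*a)" using w0 by (simp add: field_simps power2_eq_square)
        moreover have "GG d D a b = 4*d*a + u^2/w" unfolding G ps uvw by simp
        ultimately show ?thesis unfolding M by (simp add: algebra_simps)
      next
        assume h: "D < d \<and> a < b"
        hence M: "max D d * max b a = d * b" by simp
        have v1: "v < 2*w" using uvw uv by linarith
        have v2: "v < (d-D)*b" unfolding v_def vv_def using h assms
          by (simp add: algebra_simps)
        have "v * v < (2*w)*((d-D)*b)" using v1 v2 uv by (intro mult_strict_mono) auto
        also have "\<dots> \<le> 4*w*((d-D)*b)" using w0 h assms by simp
        finally have "v^2/w < 4*((d-D)*b)" using w0 by (simp add: field_simps power2_eq_square)
        moreover have "u^2/(u+v) = u - v + v^2/(u+v)" using uv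
          by (simp add: field_simps power2_eq_square)
        moreover have "4*d*a + 2*(u - v) = 4*D*b"
          unfolding u_def v_def uu_def vv_def by (simp add: algebra_simps)
        ultimately have "GG d D a b = 4*D*b + v^2/w" unfolding G ps uvw by (simp add: algebra_simps)
        with \<open>v^2/w < 4*((d-D)*b)\<close> show ?thesis unfolding M by (simp add: algebra_simps)
      qed
      thus ?thesis using P by simp
    qed
  qed
qed



lemma lim_main:
  assumes d0: "d > 0" and a0: "a > 0" and b0: "b > 0"
  shows "\<exists>L>0. ((\<lambda>D'. c_star_inf d D' a b / sqrt D') \<longlongrightarrow> L) at_top"
proof (cases "a < 2*b")
  case True
  define N where "N = max (2*d) (d*b/(2*b-a)) + 1"
  have ev: "\<forall>\<^sub>F D in at_top. c_star_inf d D a b / sqrt D = 2 * sqrt b"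
    using eventually_ge_at_top[of N]
  proof (rule eventually_mono)
    fix D assume DN: "N \<le> D"
    have D0: "D > 0" using DN d0 unfolding N_def by linarith
    have "2*d \<le> D" using DN unfolding N_def by linarith
    hence "2*d*a \<le> D*a" using a0 by simp
    moreover have "d*b > 0" using d0 b0 by simp
    ultimately have u: "uu d D a b \<ge> 0" unfolding uu_def by linarith
    have "d*b/(2*b-a) \<le> D" using DN unfolding N_def by linarith
    hence "d*b \<le> D*(2*b-a)" using True by (simp add: pos_divide_le_eq mult.commute)
    hence v: "vv d D a b \<le> 0" unfolding vv_def by (simp add: algebra_simps)
    have "GG d D a b = 4*(D*b)" using u v unfolding GG_def psi_def uu_def vv_def
      by (simp add: algebra_simps)
    hence "c_star_inf d D a b = sqrt 4 * sqrt D * sqrt b"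
      using key[OF d0 D0 a0 b0] by (simp add: real_sqrt_mult)
    thus "c_star_inf d D a b / sqrt D = 2 * sqrt b" using D0 by simp
  qed
  show ?thesis
    by (rule exI[of _ "2 * sqrt b"]) (use b0 tendsto_eventually[OF ev] in auto)
next
  case False
  hence ab: "a > b" using b0 by linarith
  define F where "F = (\<lambda>D. 4*d*a/D + (a + (d*b - 2*d*a)/D)^2 / ((1 - d/D)*(a-b)))"
  have inv: "((\<lambda>D::real. c / D) \<longlongrightarrow> 0) at_top" for c
    by (intro tendsto_divide_0[OF tendsto_const] filterlim_at_top_imp_at_infinity filterlim_ident)
  have "(F \<longlongrightarrow> 4*d*a*0 + (a + 0)^2/((1 - 0)*(a-b))) at_top"
    unfolding F_def
    by (intro tendsto_intros inv[of "4*d*a", simplified] inv) (use ab inv[of "4*d*a"] in auto)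
  hence lF: "(F \<longlongrightarrow> a^2/(a-b)) at_top" by simp
  have ev: "\<forall>\<^sub>F D in at_top. sqrt (F D) = c_star_inf d D a b / sqrt D"
    using eventually_gt_at_top[of "2*d"]
  proof (rule eventually_mono)
    fix D assume DN: "2*d < D"
    have D0: "D > 0" "D \<noteq> 0" "D - d > 0" using DN d0 by auto
    have "2*d*a < D*a" using DN a0 by simp
    moreover have "d*b > 0" using d0 b0 by simp
    ultimately have u: "uu d D a b > 0" unfolding uu_def by linarith
    have "D*(a - 2*b) \<ge> 0" using False D0 by simp
    moreover have "d*b > 0" using d0 b0 by simp
    ultimately have v: "vv d D a b > 0" unfolding vv_def by (simp add: algebra_simps)
    have w: "uu d D a b + vv d D a b = 2*((D-d)*(a-b))" unfolding uu_def vv_def by (simp add: algebra_simps)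
    have "GG d D a b = 4*d*a + (uu d D a b)^2/((D-d)*(a-b))"
      using u v w unfolding GG_def psi_def by simp
    also have "\<dots> = D * F D"
    proof -
      define U where "U = uu d D a b"
      have e1: "a + (d*b - 2*d*a)/D = U / D" using D0 by (simp add: U_def uu_def field_simps)
      define W where "W = (D - d) * (a - b)"
      have e2: "(1 - d/D)*(a-b) = W/D" using D0 by (simp add: W_def field_simps)
      have nz: "W \<noteq> 0" using D0 ab by (simp add: W_def)
      show ?thesis unfolding F_def e1 e2 U_def[symmetric] W_def[symmetric] using D0 nz
        by (simp add: field_simps power2_eq_square)
    qed
    finally have "c_star_inf d D a b = sqrt D * sqrt (F D)"
      using key[OF d0 D0(1) a0 b0] by (simp add: real_sqrt_mult)
    thus "sqrt (F D) = c_star_inf d D a b / sqrt D" using D0 by simp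
  qed
  have "((\<lambda>D. sqrt (F D)) \<longlongrightarrow> sqrt (a^2/(a-b))) at_top"
    by (intro tendsto_intros lF)
  hence "((\<lambda>D. c_star_inf d D a b / sqrt D) \<longlongrightarrow> sqrt (a^2/(a-b))) at_top"
    using tendsto_cong[OF ev] by simp
  moreover have "sqrt (a^2/(a-b)) > 0" using ab a0 by simp
  ultimately show ?thesis by blast
qed


theorem proposition2p9:
  fixes d D f0 g0 :: real
  assumes "d > 0" and "D > 0" and "f0 > 0" and "g0 > 0"
  shows
    "max (c_f d f0) (c_g D g0) \<le> c_star_inf d D f0 g0
     \<and> c_star_inf d D f0 g0 \<le> 2 * sqrt (max D d * max g0 f0)
     \<and> (c_star_inf d D f0 g0 < 2 * sqrt (max D d * max g0 f0) \<longleftrightarrow>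
          ((D > d \<and> f0 > g0) \<or> (D < d \<and> f0 < g0)))
     \<and> continuous_on {p :: real \<times> real \<times> real \<times> real.
            fst p > 0 \<and> fst (snd p) > 0 \<and> fst (snd (snd p)) > 0 \<and> snd (snd (snd p)) > 0}
          (\<lambda>(d', D', a, b). c_star_inf d' D' a b)
     \<and> mono_on {0<..} (\<lambda>D'. c_star_inf d D' f0 g0)
     \<and> (\<exists>L>0. ((\<lambda>D'. c_star_inf d D' f0 g0 / sqrt D') \<longlongrightarrow> L) at_top)"
proof -
  have K: "c_star_inf d D f0 g0 = sqrt (GG d D f0 g0)" using key assms by blast
  have lo: "4*d*f0 \<le> GG d D f0 g0" "4*D*g0 \<le> GG d D f0 g0" using GG_lower assms by blast+
  have cf: "c_f d f0 = sqrt (4*d*f0)" unfolding c_f_def sqrt4 by (simp add: mult.assoc)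
  have cg: "c_g D g0 = sqrt (4*D*g0)" unfolding c_g_def sqrt4 by (simp add: mult.assoc)
  have up: "2 * sqrt (max D d * max g0 f0) = sqrt (4 * (max D d * max g0 f0))" by (rule sqrt4)
  have U: "GG d D f0 g0 \<le> 4 * (max D d * max g0 f0)
     \<and> (GG d D f0 g0 < 4 * (max D d * max g0 f0) \<longleftrightarrow> ((D > d \<and> f0 > g0) \<or> (D < d \<and> f0 < g0)))"
    using GG_upper assms by blast
  show ?thesis
    unfolding K cf cg up
    using lo U cont_main mono_main[of d f0 g0] lim_main[of d f0 g0] assms
    by (auto simp del: real_sqrt_mult simp add: key)
qed

end
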